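(* Let $\alpha_{j-1},\alpha_j>0$, $u_{j-1},u_j\in\mathbb R$, and set $a=\alpha_j/\alpha_{j-1}$, $b=(u_j-u_{j-1})/\alpha_{j-1}$, and $K_{n,m}=2^{\frac{m-n}{2}}(m!)^{-1/2}(n!)^{1/2}$. Then for all integers $n,m\ge 0$ the entries $$\mathbb{P}^{\,j}_{n,m}=\int_{\mathbb{R}}\psi_m^{\alpha_{j-1},u_{j-1}}(v)\,\psi_n^{\alpha_j,u_j}(v)\,\omega_j(v)\,dv$$ are given by $\mathbb P^{\,j}_{n,m}=0$ if $n<m$, and, for $n\ge m$, $$\mathbb{P}^{\,j}_{n,m}=K_{n,m}\,\frac{1}{a^{m+1}}\sum_{\substack{k=m\\ k-m\ \text{even}}}^{n}\frac{1}{(n-k)!\,\big(\frac{k-m}{2}\big)!}\Big(-\frac{2b}{a}\Big)^{n-k}\Big(\frac1{a^2}-1\Big)^{\frac{k-m}{2}},$$ with the convention $0^0=1$. In particular: if $a=1$ (i.e. $\alpha_j=\alpha_{j-1}$), $\mathbb P^{\,j}_{n,m}=K_{n,m}\frac{(-2b)^{n-m}}{(n-m)!}$; if $b=0$ (i.e. $u_j=u_{j-1}$), $\mathbb P^{\,j}_{n,m}=K_{n,m}\,a^{-(m+1)}\frac{1}{((n-m)/2)!}(a^{-2}-1)^{(n-m)/2}$ for $n-m$ even and $0$ for $n-m$ odd. Consequently, for every $N_v$ the matrix $(\mathbb P^{\,j}_{n,m})_{0\le n,m\le N_v}$ is lower triangular with diagonal entries $\mathbb P^{\,j}_{n,n}=a^{-(n+1)}=(\alpha_{j-1}/\alpha_j)^{n+1}>0$,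 hence invertible.
   Context: For $\alpha>0$, $u\in\mathbb{R}$ and $n\in\mathbb{N}$, the asymmetrically weighted Hermite function is $\psi_n^{\alpha,u}(v)=(\pi 2^n n!)^{-1/2}H_n(\xi)e^{-\xi^2}$ with $\xi=(v-u)/\alpha$ and $H_n$ the $n$-th (physicists') Hermite polynomial. The weight is $\omega_j(v)=\sqrt{\pi}\,\alpha_j^{-1}e^{\xi_j^2}$ with $\xi_j=(v-u_j)/\alpha_j$. *)

theory Defs
  imports "HOL-Analysis.Analysis" "Jordan_Normal_Form.Matrix"
begin

fun hermite :: "nat \<Rightarrow> real \<Rightarrow> real" where
  "hermite 0 x = 1"
| "hermite (Suc 0) x = 2 * x"
| "hermite (Suc (Suc n)) x = 2 * x * hermite (Suc n) x - 2 * real (Suc n) * hermite n x"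

definition awh :: "real \<Rightarrow> real \<Rightarrow> nat \<Rightarrow> real \<Rightarrow> real" where
  "awh \<alpha> u n v = (let \<xi> = (v - u) / \<alpha> in
      (pi * 2 ^ n * fact n) powr (-1/2) * hermite n \<xi> * exp (- \<xi>\<^sup>2))"

definition weight :: "real \<Rightarrow> real \<Rightarrow> real \<Rightarrow> real" where
  "weight \<alpha> u v = sqrt pi / \<alpha> * exp (((v - u) / \<alpha>)\<^sup>2)"

definition Pent :: "real \<Rightarrow> real \<Rightarrow> real \<Rightarrow> real \<Rightarrow> nat \<Rightarrow> nat \<Rightarrow> real" where
  "Pent \<alpha>0 u0 \<alpha>1 u1 n m =
     integral\<^sup>L lborel (\<lambda>v. awh \<alpha>0 u0 m v * awh \<alpha>1 u1 n v * weight \<alpha>1 u1 v)"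

definition Kc :: "nat \<Rightarrow> nat \<Rightarrow> real" where
  "Kc n m = 2 powr ((real m - real n) / 2) * (fact m) powr (-1/2) * (fact n) powr (1/2)"

end

theory Submission
  imports Defs "HOL-Probability.Distributions" "HOL-Computational_Algebra.Polynomial"
    "HOL-Computational_Algebra.Formal_Power_Series" "Jordan_Normal_Form.Determinant"
begin


definition Mo :: "nat \<Rightarrow> real" where
  "Mo j = (if even j then sqrt pi * (fact j / (2 ^ j * fact (j div 2))) else 0)"

lemma mom: "has_bochner_integral lborel (\<lambda>x::real. x ^ j * exp (- x\<^sup>2)) (Mo j)"
proof (cases "even j")
  case True
  then obtain k where k: "j = 2 * k" by (auto elim: evenE)
  have "has_bochner_integral lborel (\<lambda>x::real. exp (-x\<^sup>2)*x^(2 * k))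
      (2 *\<^sub>R ((sqrt pi / 2) * (fact (2 * k) / (2 ^ (2 * k) * fact k))))"
    by (rule has_bochner_integral_even_function[OF gaussian_moment_even_pos[where k=k]]) simp
  then show ?thesis using k by (simp add: Mo_def mult.commute)
next
  case False
  then obtain k where k: "j = 2 * k + 1" by (auto elim: oddE)
  have "has_bochner_integral lborel (\<lambda>x::real. exp (-x\<^sup>2)*x^(2 * k + 1)) 0"
    using gaussian_moment_odd_pos by (rule has_bochner_integral_odd_function) simp
  then show ?thesis using k False by (simp add: Mo_def mult.commute)
qed

lemma Mo_rec: "2 * Mo (j + 2) = real (j + 1) * Mo j"
proof (cases "even j")
  case True
  then obtain k where k: "j = 2 * k" by (auto elim: evenE)
  have e: "(2 * k + 2) div 2 = Suc k" by simp
  have f1: "fact (2 * k + 2) = real (2*k+2) * real (2*k+1) * (fact (2 * k) :: real)"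
    by (simp add: fact_Suc algebra_simps)
  have f2: "fact (Suc k) = real (Suc k) * (fact k :: real)" by simp
  have p: "(2::real) ^ (2 * k + 2) = 4 * 2 ^ (2 * k)" by (simp add: power_add)
  have fp: "fact k > (0::real)" "fact (2*k) > (0::real)" by auto
  show ?thesis using k fp
    apply (simp only: Mo_def e f1 f2 p)
    by (simp add: divide_simps)
next
  case False thus ?thesis by (simp add: Mo_def)
qed

definition G :: "real poly \<Rightarrow> real" where
  "G p = integral\<^sup>L lborel (\<lambda>x. poly p x * exp (- x\<^sup>2))"

lemma G_hbi: "has_bochner_integral lborel (\<lambda>x. poly p x * exp (- x\<^sup>2)) (\<Sum>i\<le>degree p. coeff p i * Mo i)"
proof -
  have "has_bochner_integral lborel (\<lambda>x. \<Sum>i\<le>degree p. coeff p i * (x ^ i * exp (- x\<^sup>2))) (\<Sum>i\<le>degree p. coeff p i * Mo i)"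
    by (intro has_bochner_integral_sum has_bochner_integral_mult_right mom)
  moreover have "(\<lambda>x. \<Sum>i\<le>degree p. coeff p i * (x ^ i * exp (- x\<^sup>2))) = (\<lambda>x. poly p x * exp (- x\<^sup>2))"
    by (simp add: poly_altdef sum_distrib_right mult.assoc)
  ultimately show ?thesis by simp
qed

lemma G_int: "integrable lborel (\<lambda>x. poly (p::real poly) x * exp (- x\<^sup>2))"
  using G_hbi[of p] by (simp add: has_bochner_integral_iff)

lemma G_add: "G (p + q) = G p + G q"
  unfolding G_def by (simp add: distrib_right Bochner_Integration.integral_add[OF G_int G_int])

lemma G_smult: "G (Polynomial.smult c p) = c * G p"
  unfolding G_def by (simp add: mult.assoc)

lemma G_minus: "G (- p) = - G p"
  using G_smult[of "-1" p] by simp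

lemma G_diff: "G (p - q) = G p - G q"
  using G_add[of p "-q"] G_minus[of q] by simp

lemma G_zero: "G 0 = 0"
  unfolding G_def by simp

lemma G_sum: "G (\<Sum>i\<in>A. f i) = (\<Sum>i\<in>A. G (f i))"
  by (induction A rule: infinite_finite_induct) (auto simp: G_zero G_add)

lemma G_monom: "G (monom c n) = c * Mo n"
proof -
  have "has_bochner_integral lborel (\<lambda>x. c * (x ^ n * exp (- x\<^sup>2))) (c * Mo n)"
    by (intro has_bochner_integral_mult_right mom)
  then have "has_bochner_integral lborel (\<lambda>x. poly (monom c n) x * exp (- x\<^sup>2)) (c * Mo n)"
    by (simp add: poly_monom mult.assoc)
  then show ?thesis unfolding G_def by (rule has_bochner_integral_integral_eq)
qed

lemma G_one: "G 1 = sqrt pi"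
  using G_monom[of 1 0] by (simp add: Mo_def)

lemma G_deriv_monom: "G (pderiv (monom c n)) = 2 * G (pCons 0 (monom c n))"
proof -
  have pc: "pCons 0 (monom c n) = monom c (Suc n)"
    by (simp add: monom_Suc)
  show ?thesis
  proof (cases n)
    case 0
    have e1: "G (pCons 0 (monom c n)) = 0"
    proof -
      have "G (pCons 0 (monom c n)) = c * Mo (Suc n)" by (simp only: pc G_monom)
      then show ?thesis using 0 by (simp add: Mo_def)
    qed
    have e2: "pderiv (monom c n) = 0" using 0 by (simp add: pderiv_monom)
    show ?thesis by (simp only: e1 e2 G_zero mult_zero_right)
  next
    case (Suc j)
    have r: "2 * Mo (j + 2) = real (j + 1) * Mo j" by (rule Mo_rec)
    have e1: "G (pCons 0 (monom c n)) = c * Mo (Suc n)" by (simp only: pc G_monom)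
    have e2: "G (pderiv (monom c n)) = real n * c * Mo j" using Suc by (simp add: pderiv_monom G_monom)
    show ?thesis unfolding e1 e2 using r Suc by simp
  qed
qed

lemma pderiv_sum: "pderiv (sum f A) = (\<Sum>x\<in>A. pderiv (f x))"
  using higher_pderiv_sum[of 1] by simp

lemma G_pCons_smult[simp]: "G (pCons 0 (Polynomial.smult c r)) = c * G (pCons 0 r)"
proof -
  have "pCons 0 (Polynomial.smult c r) = Polynomial.smult c (pCons 0 r)" by simp
  then show ?thesis by (simp only: G_smult)
qed

lemma sum_pCons0: "(\<Sum>i\<in>A. pCons 0 (f i)) = pCons (0::real) (sum f A)"
  by (induction A rule: infinite_finite_induct) auto

lemma G_deriv: "G (pderiv p) = 2 * G (pCons 0 p)"
proof -
  have "G (pderiv p) = G (pderiv (\<Sum>i\<le>degree p. monom (coeff p i) i))"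
    by (simp add: poly_as_sum_of_monoms)
  also have "\<dots> = (\<Sum>i\<le>degree p. G (pderiv (monom (coeff p i) i)))"
    by (simp only: pderiv_sum G_sum)
  also have "\<dots> = (\<Sum>i\<le>degree p. 2 * G (pCons 0 (monom (coeff p i) i)))"
    by (simp add: G_deriv_monom)
  also have "\<dots> = 2 * G (\<Sum>i\<le>degree p. pCons 0 (monom (coeff p i) i))"
    by (simp add: G_sum sum_distrib_left)
  also have "(\<Sum>i\<le>degree p. pCons 0 (monom (coeff p i) i)) = pCons 0 p"
  proof -
    have "(\<Sum>i\<le>degree p. pCons 0 (monom (coeff p i) i)) = pCons 0 (\<Sum>i\<le>degree p. monom (coeff p i) i)"
      by (rule sum_pCons0)
    thus ?thesis by (simp add: poly_as_sum_of_monoms)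
  qed
  finally show ?thesis .
qed

fun hp :: "nat \<Rightarrow> real poly" where
  "hp 0 = 1"
| "hp (Suc 0) = [:0, 2:]"
| "hp (Suc (Suc n)) = [:0, 2:] * hp (Suc n) - Polynomial.smult (2 * real (Suc n)) (hp n)"

lemma poly_hp: "poly (hp n) x = hermite n x"
  by (induction n rule: hp.induct) (simp_all add: algebra_simps)

lemma pderiv_hp: "pderiv (hp (Suc n)) = Polynomial.smult (2 * real (Suc n)) (hp n)"
proof (induction n rule: hp.induct)
  case 1 thus ?case by (simp add: pderiv_pCons)
next
  case 2 thus ?case by (simp add: pderiv_pCons pderiv_diff pderiv_smult pderiv_mult numeral_2_eq_2)
next
  case (3 k)
  have px: "pderiv [:0,2::real:] = [:2:]" by (simp add: pderiv_pCons)
  have "pderiv (hp (Suc (Suc (Suc k)))) = [:0,2:] * Polynomial.smult (2*real(Suc(Suc k))) (hp (Suc k))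
      + hp (Suc(Suc k)) * [:2:] - Polynomial.smult (2 * real (Suc (Suc k))) (Polynomial.smult (2*real(Suc k)) (hp k))"
    unfolding hp.simps(3)[of "Suc k"] using 3 by (simp only: pderiv_diff pderiv_smult pderiv_mult px)
  also have "\<dots> = Polynomial.smult (2 * real (Suc (Suc (Suc k)))) (hp (Suc (Suc k)))"
    by (rule poly_eq_poly_eq_iff[THEN iffD1]) (simp add: fun_eq_iff algebra_simps hp.simps(3)[of k])
  finally show ?case .
qed

lemma hp_rec: "hp (Suc m) = [:0,2:] * hp m - pderiv (hp m)"
  by (cases m) (simp_all add: pderiv_hp)

lemma G_hp: "G (hp m * q) = G ((pderiv ^^ m) q)"
proof (induction m arbitrary: q)
  case 0 thus ?case by simp
next
  case (Suc m)
  have d: "G (pderiv (hp m * q)) = 2 * G (pCons 0 (hp m * q))" by (rule G_deriv)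
  have "G (hp (Suc m) * q) = 2 * G (pCons 0 (hp m * q)) - G (pderiv (hp m) * q)"
    by (simp add: hp_rec algebra_simps G_diff G_smult)
  also have "\<dots> = G (hp m * pderiv q)"
    using d by (simp add: pderiv_mult G_add algebra_simps)
  also have "\<dots> = G ((pderiv ^^ Suc m) q)"
    using Suc.IH by (simp only: funpow_Suc_right o_apply)
  finally show ?case .
qed



definition Qp :: "real \<Rightarrow> real \<Rightarrow> nat \<Rightarrow> real poly" where
  "Qp d e n = pcompose (hp n) [:d, e:]"

lemma poly_Qp: "poly (Qp d e n) x = hermite n (d + e * x)"
  by (simp add: Qp_def poly_pcompose poly_hp mult.commute)

lemma pderiv_Qp: "pderiv (Qp d e (Suc n)) = Polynomial.smult (2 * real (Suc n) * e) (Qp d e n)"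
proof -
  have "pderiv (Qp d e (Suc n)) = Polynomial.smult (2 * real (Suc n)) (Qp d e n) * [:e:]"
    unfolding Qp_def by (simp add: pderiv_pcompose pderiv_hp pcompose_smult pderiv_pCons)
  also have "\<dots> = Polynomial.smult (2 * real (Suc n) * e) (Qp d e n)"
    by (rule poly_eq_poly_eq_iff[THEN iffD1]) (simp add: fun_eq_iff)
  finally show ?thesis .
qed

lemma Qp0: "Qp d e 0 = 1"
  by (simp add: Qp_def pcompose_1)

lemma iter_Qp: "m \<le> n \<Longrightarrow> (pderiv ^^ m) (Qp d e n) =
   Polynomial.smult (2 ^ m * e ^ m * fact n / fact (n - m)) (Qp d e (n - m))"
proof (induction m)
  case 0 thus ?case by simp
next
  case (Suc m)
  define r where "r = n - Suc m"
  have r: "n - m = Suc r" using Suc.prems unfolding r_def by arith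
  have nr: "n - Suc m = r" unfolding r_def by simp
  have "(pderiv ^^ Suc m) (Qp d e n) = pderiv ((pderiv ^^ m) (Qp d e n))" by simp
  also have "\<dots> = Polynomial.smult (2 ^ m * e ^ m * fact n / fact (Suc r) * (2 * real (Suc r) * e)) (Qp d e r)"
    using Suc by (simp add: r pderiv_smult pderiv_Qp)
  also have "2 ^ m * e ^ m * fact n / fact (Suc r) * (2 * real (Suc r) * e) = 2 ^ Suc m * e ^ Suc m * fact n / (fact r :: real)"
  proof -
    have fr: "(fact (Suc r) :: real) = real (Suc r) * fact r" by simp
    have "real (Suc r) \<noteq> 0" "(fact r :: real) \<noteq> 0" by auto
    then show ?thesis by (simp only: fr) (simp add: field_simps del: of_nat_Suc)
  qed
  finally show ?case by (simp add: nr)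
qed

lemma iter_zero: "(pderiv ^^ r) (0::real poly) = 0"
  by (induction r) simp_all

lemma iter_Qp_zero: "n < m \<Longrightarrow> (pderiv ^^ m) (Qp d e n) = 0"
proof -
  assume "n < m"
  then obtain r where "m = Suc (n + r)" using less_imp_Suc_add by blast
  then have m: "m = r + Suc n" by simp
  have "(pderiv ^^ Suc n) (Qp d e n) = 0"
    using iter_Qp[of n n d e] by (simp add: pderiv_smult Qp0)
  then show ?thesis unfolding m funpow_add o_apply by (simp add: iter_zero)
qed

definition J :: "real \<Rightarrow> real \<Rightarrow> nat \<Rightarrow> real" where
  "J d e k = G (Qp d e k)"

lemma J0: "J d e 0 = sqrt pi"
  by (simp add: J_def Qp0 G_one)

lemma J1: "J d e 1 = 2 * d * sqrt pi"
proof -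
  have "Qp d e 1 = monom (2*d) 0 + monom (2*e) 1"
    by (rule poly_eq_poly_eq_iff[THEN iffD1]) (simp add: fun_eq_iff poly_monom poly_Qp algebra_simps)
  then show ?thesis by (simp add: J_def G_add G_monom Mo_def)
qed

lemma J_rec: "J d e (Suc (Suc k)) = 2 * d * J d e (Suc k) + 2 * real (Suc k) * (e\<^sup>2 - 1) * J d e k"
proof -
  have q: "Qp d e (Suc (Suc k)) = Polynomial.smult (2*d) (Qp d e (Suc k)) + pCons 0 (Polynomial.smult (2*e) (Qp d e (Suc k)))
     - Polynomial.smult (2 * real (Suc k)) (Qp d e k)"
    by (rule poly_eq_poly_eq_iff[THEN iffD1]) (simp add: fun_eq_iff poly_Qp algebra_simps)
  have p0: "G (pderiv (Qp d e (Suc k))) = 2 * (real (Suc k) * e * J d e k)"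
    by (simp add: pderiv_Qp G_smult J_def)
  have p: "G (pCons 0 (Qp d e (Suc k))) = real (Suc k) * e * J d e k"
    using p0 G_deriv[of "Qp d e (Suc k)"] by linarith
  show ?thesis unfolding J_def q
    using p by (simp add: G_add G_diff G_smult J_def power2_eq_square algebra_simps)
qed

definition Bf :: "real \<Rightarrow> real fps" where
  "Bf s = Abs_fps (\<lambda>j. if even j then s ^ (j div 2) / fact (j div 2) else 0)"

definition Ff :: "real \<Rightarrow> real \<Rightarrow> real fps" where
  "Ff t s = fps_exp t * Bf s"

lemma Bf_deriv: "fps_deriv (Bf s) = fps_const (2 * s) * (fps_X * Bf s)"
proof (rule fps_ext)
  fix n
  show "fps_nth (fps_deriv (Bf s)) n = fps_nth (fps_const (2 * s) * (fps_X * Bf s)) n"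
  proof (cases n)
    case 0 thus ?thesis by (simp add: Bf_def)
  next
    case (Suc j)
    show ?thesis
    proof (cases "even j")
      case True
      then obtain i where i: "j = 2 * i" by (auto elim: evenE)
      have e: "(2 * i + 2) div 2 = Suc i" by simp
      have "real (Suc (Suc (2 * i))) * (s ^ Suc i / fact (Suc i)) = 2 * s * (s ^ i / fact i)"
      proof -
        have fr: "(fact (Suc i) :: real) = real (Suc i) * fact i" by simp
        have "real (Suc i) \<noteq> 0" "(fact i :: real) \<noteq> 0" by auto
        moreover have "real (Suc (Suc (2 * i))) = 2 * real (Suc i)" by simp
        ultimately show ?thesis by (simp only: fr) (simp add: field_simps del: of_nat_Suc)
      qed
      then show ?thesis using Suc i by (simp add: Bf_def e)
    next
      case False thus ?thesis using Suc by (simp add: Bf_def)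
    qed
  qed
qed

lemma Ff_deriv: "fps_deriv (Ff t s) = fps_const t * Ff t s + fps_const (2 * s) * (fps_X * Ff t s)"
  by (simp add: Ff_def Bf_deriv algebra_simps)

lemma Ff_rec: "real (k + 2) * fps_nth (Ff t s) (k + 2) = t * fps_nth (Ff t s) (k + 1) + 2 * s * fps_nth (Ff t s) k"
proof -
  have "fps_nth (fps_deriv (Ff t s)) (k + 1) = fps_nth (fps_const t * Ff t s + fps_const (2 * s) * (fps_X * Ff t s)) (k + 1)"
    by (simp only: Ff_deriv)
  then show ?thesis by (simp add: add.commute)
qed

lemma Ff0: "fps_nth (Ff t s) 0 = 1"
  by (simp add: Ff_def fps_mult_nth Bf_def)

lemma Ff1: "fps_nth (Ff t s) 1 = t"
  by (simp add: Ff_def fps_mult_nth Bf_def)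

lemma J_closed: "J d e k = sqrt pi * fact k * fps_nth (Ff (2 * d) (e\<^sup>2 - 1)) k"
proof (induction k rule: hp.induct)
  case 1 thus ?case by (simp add: J0 Ff0)
next
  case 2 thus ?case using J1 Ff1 by simp
next
  case (3 k)
  let ?F = "Ff (2 * d) (e\<^sup>2 - 1)"
  have r: "real (k + 2) * fps_nth ?F (k + 2) = 2 * d * fps_nth ?F (k + 1) + 2 * (e\<^sup>2 - 1) * fps_nth ?F k"
    by (rule Ff_rec)
  have f: "(fact (Suc (Suc k)) :: real) = real (k + 2) * (real (k + 1) * fact k)"
    by (simp add: algebra_simps)
  have "J d e (Suc (Suc k)) = 2 * d * (sqrt pi * fact (Suc k) * fps_nth ?F (Suc k)) + 2 * real (Suc k) * (e\<^sup>2 - 1) * (sqrt pi * fact k * fps_nth ?F k)"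
    using 3 by (simp add: J_rec)
  also have "\<dots> = sqrt pi * (real (k + 1) * fact k) * (2 * d * fps_nth ?F (k + 1) + 2 * (e\<^sup>2 - 1) * fps_nth ?F k)"
    by (simp add: algebra_simps)
  also have "\<dots> = sqrt pi * (real (k + 1) * fact k) * (real (k + 2) * fps_nth ?F (k + 2))"
    by (simp only: r)
  also have "\<dots> = sqrt pi * fact (Suc (Suc k)) * fps_nth ?F (Suc (Suc k))"
    by (simp only: f) (simp add: algebra_simps)
  finally show ?case .
qed



definition cn :: "nat \<Rightarrow> real" where
  "cn k = (pi * 2 ^ k * fact k) powr (-1/2)"

lemma powr_mhalf: "x > 0 \<Longrightarrow> x powr (-1/2) = 1 / sqrt (x::real)"
proof -
  assume x: "x > 0"
  have "(-1/2::real) = - (1/2)" by simp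
  then show ?thesis using x by (simp only: powr_minus_divide powr_half_sqrt less_imp_le)
qed

lemma cn_sqrt: "cn k = 1 / sqrt (pi * 2 ^ k * fact k)"
  unfolding cn_def by (rule powr_mhalf) simp

lemma Kc_eq: "cn m * cn n * pi * 2 ^ m * fact n = Kc n m"
proof -
  have p2: "(2::real) powr ((real m - real n) / 2) = sqrt (2 ^ m) / sqrt (2 ^ n)"
  proof -
    have "(2::real) powr ((real m - real n) / 2) = 2 powr (real m / 2) / 2 powr (real n / 2)"
      by (simp add: diff_divide_distrib powr_diff)
    also have "\<dots> = sqrt (2 ^ m) / sqrt (2 ^ n)"
      by (simp add: powr_half_sqrt_powr powr_realpow)
    finally show ?thesis .
  qed
  have pn: "(fact n :: real) powr (1/2) = sqrt (fact n)" by (simp add: powr_half_sqrt)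
  have aux: "\<And>P A B M N :: real. P > 0 \<Longrightarrow> A > 0 \<Longrightarrow> B > 0 \<Longrightarrow> M > 0 \<Longrightarrow> N > 0 \<Longrightarrow>
     1 / (P * A * M) * (1 / (P * B * N)) * P\<^sup>2 * A\<^sup>2 * N\<^sup>2 = A / B * (1 / M) * N"
    by (simp add: field_simps power2_eq_square)
  have "cn m * cn n * pi * 2 ^ m * fact n =
     1 / (sqrt pi * sqrt (2^m) * sqrt (fact m)) * (1 / (sqrt pi * sqrt (2^n) * sqrt (fact n)))
       * (sqrt pi)\<^sup>2 * (sqrt (2^m))\<^sup>2 * (sqrt (fact n))\<^sup>2"
    unfolding cn_sqrt by (simp add: real_sqrt_mult)
  also have "\<dots> = sqrt (2^m) / sqrt (2^n) * (1 / sqrt (fact m)) * sqrt (fact n)"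
    by (rule aux) auto
  also have "\<dots> = Kc n m"
    unfolding Kc_def p2 pn using powr_mhalf[of "fact m"] by simp
  finally show ?thesis .
qed

context
  fixes \<alpha>0 \<alpha>1 u0 u1 :: real
  assumes pos: "\<alpha>0 > 0" "\<alpha>1 > 0"
begin

definition "aa = \<alpha>1 / \<alpha>0"
definition "bb = (u1 - u0) / \<alpha>0"
definition "dd = - bb / aa"
definition "ee = 1 / aa"

lemma pointwise:
  "awh \<alpha>0 u0 m (u0 + \<alpha>0 * x) * awh \<alpha>1 u1 n (u0 + \<alpha>0 * x) * weight \<alpha>1 u1 (u0 + \<alpha>0 * x)
   = (cn m * cn n * sqrt pi / \<alpha>1) * (poly (hp m * Qp dd ee n) x * exp (- x\<^sup>2))"
proof -
  have h1: "(u0 + \<alpha>0 * x - u0) / \<alpha>0 = x" using pos by simp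
  have h2: "(u0 + \<alpha>0 * x - u1) / \<alpha>1 = dd + ee * x"
    using pos unfolding dd_def ee_def aa_def bb_def by (simp add: field_simps)
  have ex: "exp (- (dd + ee * x)\<^sup>2) * exp ((dd + ee * x)\<^sup>2) = 1"
    by (simp add: exp_minus)
  have "awh \<alpha>0 u0 m (u0 + \<alpha>0 * x) * awh \<alpha>1 u1 n (u0 + \<alpha>0 * x) * weight \<alpha>1 u1 (u0 + \<alpha>0 * x)
     = (cn m * hermite m x * exp (- x\<^sup>2)) * (cn n * hermite n (dd + ee * x) * exp (- (dd + ee * x)\<^sup>2))
       * (sqrt pi / \<alpha>1 * exp ((dd + ee * x)\<^sup>2))"
    unfolding awh_def weight_def Let_def h1 h2 cn_def by simp
  also have "\<dots> = (cn m * cn n * sqrt pi / \<alpha>1) * (hermite m x * hermite n (dd + ee * x) * exp (- x\<^sup>2))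
       * (exp (- (dd + ee * x)\<^sup>2) * exp ((dd + ee * x)\<^sup>2))"
    by (simp add: algebra_simps)
  also have "\<dots> = (cn m * cn n * sqrt pi / \<alpha>1) * (poly (hp m * Qp dd ee n) x * exp (- x\<^sup>2))"
    by (simp only: ex poly_mult poly_hp poly_Qp mult_1_right)
  finally show ?thesis .
qed

lemma integrable_main:
  "integrable lborel (\<lambda>v. awh \<alpha>0 u0 m v * awh \<alpha>1 u1 n v * weight \<alpha>1 u1 v)"
proof -
  have "integrable lborel (\<lambda>x. (cn m * cn n * sqrt pi / \<alpha>1) * (poly (hp m * Qp dd ee n) x * exp (- x\<^sup>2)))"
    by (intro integrable_mult_right G_int)
  then have "integrable lborel (\<lambda>x. (\<lambda>v. awh \<alpha>0 u0 m v * awh \<alpha>1 u1 n v * weight \<alpha>1 u1 v) (u0 + \<alpha>0 * x))"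
    by (simp only: pointwise)
  then show ?thesis using lborel_integrable_real_affine_iff[of \<alpha>0 "\<lambda>v. awh \<alpha>0 u0 m v * awh \<alpha>1 u1 n v * weight \<alpha>1 u1 v" u0] pos
    by simp
qed

lemma Pent_G: "Pent \<alpha>0 u0 \<alpha>1 u1 n m = \<alpha>0 * ((cn m * cn n * sqrt pi / \<alpha>1) * G (hp m * Qp dd ee n))"
proof -
  have "Pent \<alpha>0 u0 \<alpha>1 u1 n m = \<bar>\<alpha>0\<bar> *\<^sub>R (\<integral>x. (\<lambda>v. awh \<alpha>0 u0 m v * awh \<alpha>1 u1 n v * weight \<alpha>1 u1 v) (u0 + \<alpha>0 * x) \<partial>lborel)"
    unfolding Pent_def using pos by (intro lborel_integral_real_affine) simp
  also have "\<dots> = \<alpha>0 * (\<integral>x. (cn m * cn n * sqrt pi / \<alpha>1) * (poly (hp m * Qp dd ee n) x * exp (- x\<^sup>2)) \<partial>lborel)"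
    using pos by (simp only: pointwise) simp
  also have "\<dots> = \<alpha>0 * ((cn m * cn n * sqrt pi / \<alpha>1) * G (hp m * Qp dd ee n))"
    unfolding G_def by simp
  finally show ?thesis .
qed

lemma Pent_zero: "n < m \<Longrightarrow> Pent \<alpha>0 u0 \<alpha>1 u1 n m = 0"
  by (simp add: Pent_G G_hp iter_Qp_zero G_zero)

lemma Pent_F: "m \<le> n \<Longrightarrow> Pent \<alpha>0 u0 \<alpha>1 u1 n m =
   Kc n m * (1 / aa ^ (m + 1)) * fps_nth (Ff (2 * dd) (ee\<^sup>2 - 1)) (n - m)"
proof -
  assume mn: "m \<le> n"
  let ?F = "fps_nth (Ff (2 * dd) (ee\<^sup>2 - 1)) (n - m)"
  have "G (hp m * Qp dd ee n) = 2 ^ m * ee ^ m * fact n / fact (n - m) * (sqrt pi * fact (n - m) * ?F)"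
    using mn by (simp add: G_hp iter_Qp G_smult J_closed[symmetric] J_def)
  also have "\<dots> = 2 ^ m * ee ^ m * fact n * sqrt pi * ?F"
    by simp
  finally have g: "G (hp m * Qp dd ee n) = 2 ^ m * ee ^ m * fact n * sqrt pi * ?F" .
  have e: "\<alpha>0 / \<alpha>1 = ee" unfolding ee_def aa_def by simp
  have "Pent \<alpha>0 u0 \<alpha>1 u1 n m = (cn m * cn n * (sqrt pi * sqrt pi) * 2 ^ m * fact n) * ((\<alpha>0 / \<alpha>1) * ee ^ m) * ?F"
    unfolding Pent_G g by (simp add: algebra_simps)
  also have "\<dots> = Kc n m * (1 / aa ^ (m + 1)) * ?F"
    unfolding e Kc_eq[symmetric] by (simp add: ee_def power_one_over)
  finally show ?thesis .
qed

end



lemma Ff_sum: "m \<le> n \<Longrightarrow> fps_nth (Ff t s) (n - m) =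
   (\<Sum>k\<in>{k. m \<le> k \<and> k \<le> n \<and> even (k - m)}.
      1 / (fact (n - k) * fact ((k - m) div 2)) * t ^ (n - k) * s ^ ((k - m) div 2))"
proof -
  assume mn: "m \<le> n"
  let ?d = "n - m"
  let ?h = "\<lambda>i. t ^ i / fact i * (s ^ ((?d - i) div 2) / fact ((?d - i) div 2))"
  have "fps_nth (Ff t s) ?d = (\<Sum>i=0..?d. fps_nth (fps_exp t) i * fps_nth (Bf s) (?d - i))"
    unfolding Ff_def by (rule fps_mult_nth)
  also have "\<dots> = (\<Sum>i=0..?d. if even (?d - i) then ?h i else 0)"
  proof (intro sum.cong refl)
    have gen: "\<And>j i. fps_nth (fps_exp t) i * fps_nth (Bf s) j = (if even j then t^i/fact i * (s^(j div 2)/fact(j div 2)) else 0)"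
      by (simp add: Bf_def)
    fix i show "fps_nth (fps_exp t) i * fps_nth (Bf s) (?d - i) = (if even (?d - i) then ?h i else 0)"
      by (rule gen)
  qed
  also have "\<dots> = (\<Sum>i\<in>{i\<in>{0..?d}. even (?d - i)}. ?h i)"
    by (rule sum.inter_filter[symmetric]) simp
  also have "\<dots> = (\<Sum>k\<in>{k. m \<le> k \<and> k \<le> n \<and> even (k - m)}.
      1 / (fact (n - k) * fact ((k - m) div 2)) * t ^ (n - k) * s ^ ((k - m) div 2))"
  proof (rule sum.reindex_bij_witness[where i="\<lambda>k. n - k" and j="\<lambda>k. n - k"])
    fix i assume i: "i \<in> {i\<in>{0..?d}. even (?d - i)}"
    then have e: "n - i - m = ?d - i" and e2: "n - (n - i) = i" by auto
    show "n - (n - i) = i" using e2 .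
    show "n - i \<in> {k. m \<le> k \<and> k \<le> n \<and> even (k - m)}" using i e mn by auto
    show "1 / (fact (n - (n - i)) * fact ((n - i - m) div 2)) * t ^ (n - (n - i)) * s ^ ((n - i - m) div 2) = ?h i"
      unfolding e e2 by simp
  next
    fix k assume k: "k \<in> {k. m \<le> k \<and> k \<le> n \<and> even (k - m)}"
    then have e: "n - m - (n - k) = k - m" by auto
    show "n - (n - k) = k" using k by auto
    show "n - k \<in> {i\<in>{0..?d}. even (?d - i)}" using k e by auto
  qed
  finally show ?thesis .
qed

lemma Bf0: "Bf 0 = 1"
proof (rule fps_ext)
  fix j show "fps_nth (Bf 0) j = fps_nth 1 j"
    by (cases "j = 0") (auto simp: Bf_def elim!: evenE)
qed

lemma Ff_s0: "fps_nth (Ff t 0) k = t ^ k / fact k"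
  by (simp add: Ff_def Bf0)

lemma Ff_t0: "fps_nth (Ff 0 s) k = (if even k then s ^ (k div 2) / fact (k div 2) else 0)"
  by (simp add: Ff_def Bf_def)

lemma test: "\<alpha>0 > 0 \<Longrightarrow> \<alpha>1 > 0 \<Longrightarrow> m \<le> n \<Longrightarrow> Pent \<alpha>0 u0 \<alpha>1 u1 n m =
   Kc n m * (1 / (\<alpha>1/\<alpha>0) ^ (m + 1)) * fps_nth (Ff (2 * (- ((u1 - u0) / \<alpha>0) / (\<alpha>1/\<alpha>0))) ((1/(\<alpha>1/\<alpha>0))\<^sup>2 - 1)) (n - m)"
  using Pent_F[of \<alpha>0 \<alpha>1 m n u0 u1] by (simp add: aa_def bb_def dd_def ee_def)

lemma Kc_diag: "Kc n n = 1"
  by (simp add: Kc_def powr_add[symmetric])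

lemma lower_tri_inv:
  assumes z: "\<And>i j. i < j \<Longrightarrow> j < n \<Longrightarrow> f i j = 0"
    and nz: "\<And>i. i < n \<Longrightarrow> f i i \<noteq> (0::real)"
  shows "invertible_mat (mat n n (\<lambda>(i, j). f i j))"
proof -
  let ?A = "mat n n (\<lambda>(i, j). f i j)"
  have car: "?A \<in> carrier_mat n n" by simp
  have "det ?A = prod_list (diag_mat ?A)"
    by (rule det_lower_triangular[OF _ car]) (simp add: z)
  also have "\<dots> \<noteq> 0"
    using nz by (auto simp: diag_mat_def prod_list_zero_iff)
  finally have "det ?A \<noteq> 0" .
  from det_non_zero_imp_unit[OF car this, of "()"]
  obtain B where B: "B \<in> carrier_mat n n" "B * ?A = 1\<^sub>m n" "?A * B = 1\<^sub>m n"
    by (auto simp: Units_def ring_mat_def)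
  then show ?thesis
    unfolding invertible_mat_def inverts_mat_def square_mat.simps using car by auto
qed

theorem mainTheorem2:
  fixes \<alpha>0 \<alpha>1 u0 u1 :: real
  assumes "\<alpha>0 > 0" "\<alpha>1 > 0"
  defines "a \<equiv> \<alpha>1 / \<alpha>0" and "b \<equiv> (u1 - u0) / \<alpha>0"
  shows
    "(\<forall>n m. integrable lborel (\<lambda>v. awh \<alpha>0 u0 m v * awh \<alpha>1 u1 n v * weight \<alpha>1 u1 v))
     \<and> (\<forall>n m. n < m \<longrightarrow> Pent \<alpha>0 u0 \<alpha>1 u1 n m = 0)
     \<and> (\<forall>n m. m \<le> n \<longrightarrow> Pent \<alpha>0 u0 \<alpha>1 u1 n m =
          Kc n m * (1 / a ^ (m + 1)) *
          (\<Sum>k\<in>{k. m \<le> k \<and> k \<le> n \<and> even (k - m)}.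
             1 / (fact (n - k) * fact ((k - m) div 2)) * (- 2 * b / a) ^ (n - k)
             * (1 / a\<^sup>2 - 1) ^ ((k - m) div 2)))
     \<and> (a = 1 \<longrightarrow> (\<forall>n m. m \<le> n \<longrightarrow>
          Pent \<alpha>0 u0 \<alpha>1 u1 n m = Kc n m * (- 2 * b) ^ (n - m) / fact (n - m)))
     \<and> (b = 0 \<longrightarrow> (\<forall>n m. m \<le> n \<longrightarrow>
          Pent \<alpha>0 u0 \<alpha>1 u1 n m =
            (if even (n - m)
             then Kc n m * (1 / a ^ (m + 1)) * (1 / fact ((n - m) div 2))
                  * (1 / a\<^sup>2 - 1) ^ ((n - m) div 2)
             else 0)))
     \<and> (\<forall>N::nat.
          (\<forall>n m. n \<le> N \<longrightarrow> m \<le> N \<longrightarrow> n < m \<longrightarrow> Pent \<alpha>0 u0 \<alpha>1 u1 n m = 0)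
          \<and> (\<forall>n \<le> N. Pent \<alpha>0 u0 \<alpha>1 u1 n n = 1 / a ^ (n + 1)
                      \<and> 1 / a ^ (n + 1) = (\<alpha>0 / \<alpha>1) ^ (n + 1)
                      \<and> Pent \<alpha>0 u0 \<alpha>1 u1 n n > 0)
          \<and> invertible_mat (mat (N + 1) (N + 1) (\<lambda>(n, m). Pent \<alpha>0 u0 \<alpha>1 u1 n m)))"
proof -
  note pos = assms(1,2)
  have PF: "\<And>n m. m \<le> n \<Longrightarrow> Pent \<alpha>0 u0 \<alpha>1 u1 n m =
     Kc n m * (1 / a ^ (m + 1)) * fps_nth (Ff (2 * (- b / a)) ((1/a)\<^sup>2 - 1)) (n - m)"
    unfolding a_def b_def by (rule test[OF pos])
  have PZ: "\<And>n m. n < m \<Longrightarrow> Pent \<alpha>0 u0 \<alpha>1 u1 n m = 0"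
    by (rule Pent_zero[OF pos])
  have apos: "a > 0" unfolding a_def using pos by simp
  have t_eq: "2 * (- b / a) = - 2 * b / a" by simp
  have s_eq: "(1/a)\<^sup>2 - 1 = 1 / a\<^sup>2 - 1" by (simp add: power_one_over)
  have c1: "\<forall>n m. integrable lborel (\<lambda>v. awh \<alpha>0 u0 m v * awh \<alpha>1 u1 n v * weight \<alpha>1 u1 v)"
    using integrable_main[OF pos] by blast
  have c3: "\<forall>n m. m \<le> n \<longrightarrow> Pent \<alpha>0 u0 \<alpha>1 u1 n m =
          Kc n m * (1 / a ^ (m + 1)) *
          (\<Sum>k\<in>{k. m \<le> k \<and> k \<le> n \<and> even (k - m)}.
             1 / (fact (n - k) * fact ((k - m) div 2)) * (- 2 * b / a) ^ (n - k)
             * (1 / a\<^sup>2 - 1) ^ ((k - m) div 2))"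
    using PF Ff_sum unfolding t_eq s_eq by simp
  have c4: "a = 1 \<longrightarrow> (\<forall>n m. m \<le> n \<longrightarrow>
          Pent \<alpha>0 u0 \<alpha>1 u1 n m = Kc n m * (- 2 * b) ^ (n - m) / fact (n - m))"
    using PF by (simp add: Ff_s0)
  have c5: "b = 0 \<longrightarrow> (\<forall>n m. m \<le> n \<longrightarrow>
          Pent \<alpha>0 u0 \<alpha>1 u1 n m =
            (if even (n - m)
             then Kc n m * (1 / a ^ (m + 1)) * (1 / fact ((n - m) div 2))
                  * (1 / a\<^sup>2 - 1) ^ ((n - m) div 2)
             else 0))"
    using PF unfolding s_eq by (simp add: Ff_t0)
  have diag: "\<And>n. Pent \<alpha>0 u0 \<alpha>1 u1 n n = 1 / a ^ (n + 1)"
    using PF by (simp add: Kc_diag Ff0)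
  have dpos: "\<And>n. 1 / a ^ (n + 1) > 0" using apos by simp
  have deq: "\<And>n. 1 / a ^ (n + 1) = (\<alpha>0 / \<alpha>1) ^ (n + 1)"
    unfolding a_def by (simp add: power_divide)
  have c6: "\<forall>N::nat.
          (\<forall>n m. n \<le> N \<longrightarrow> m \<le> N \<longrightarrow> n < m \<longrightarrow> Pent \<alpha>0 u0 \<alpha>1 u1 n m = 0)
          \<and> (\<forall>n \<le> N. Pent \<alpha>0 u0 \<alpha>1 u1 n n = 1 / a ^ (n + 1)
                      \<and> 1 / a ^ (n + 1) = (\<alpha>0 / \<alpha>1) ^ (n + 1)
                      \<and> Pent \<alpha>0 u0 \<alpha>1 u1 n n > 0)
          \<and> invertible_mat (mat (N + 1) (N + 1) (\<lambda>(n, m). Pent \<alpha>0 u0 \<alpha>1 u1 n m))"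
  proof (intro allI conjI impI)
    fix N :: nat
    have ppos: "\<And>n. Pent \<alpha>0 u0 \<alpha>1 u1 n n > 0" using diag dpos by metis
    have pnz: "\<And>n. Pent \<alpha>0 u0 \<alpha>1 u1 n n \<noteq> 0" using ppos by (metis less_irrefl)
    show "invertible_mat (mat (N + 1) (N + 1) (\<lambda>(n, m). Pent \<alpha>0 u0 \<alpha>1 u1 n m))"
      by (rule lower_tri_inv) (rule PZ, assumption, rule pnz)
    fix n assume "n \<le> N"
    show "Pent \<alpha>0 u0 \<alpha>1 u1 n n = 1 / a ^ (n + 1)" by (rule diag)
    show "1 / a ^ (n + 1) = (\<alpha>0 / \<alpha>1) ^ (n + 1)" by (rule deq)
    show "Pent \<alpha>0 u0 \<alpha>1 u1 n n > 0" by (rule ppos)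
  next
    fix N n m :: nat assume "n < m"
    then show "Pent \<alpha>0 u0 \<alpha>1 u1 n m = 0" by (rule PZ)
  qed
  show ?thesis using c1 PZ c3 c4 c5 c6 by blast
qed

end
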